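(* If $(\mathbb{X},\omega)$ is a $\mathcal{D}$-coalgebra, then $\mathbb{X}$ is a Cartesian differential category with differential combinator $\mathsf{D}^\omega[f]:=\omega(f)_1$.
   Context: Composition in diagrammatic order. A Cartesian left additive category: finite products, hom-sets commutative monoids with $f(g+h)=fg+fh$, $f0=0$, projections additive. A Cartesian differential category: a Cartesian left additive category with a combinator $f:A\to B\mapsto\mathsf{D}[f]:A\times A\to B$ satisfying [CD.1] $\mathsf{D}[f+g]=\mathsf{D}[f]+\mathsf{D}[g]$, $\mathsf{D}[0]=0$; [CD.2] $(1\times(\pi_0+\pi_1))\mathsf{D}[f]=(1\times\pi_0)\mathsf{D}[f]+(1\times\pi_1)\mathsf{D}[f]$, $\langle1,0\rangle\mathsf{D}[f]=0$; [CD.3] $\mathsf{D}[1]=\pi_1$, $\mathsf{D}[\pi_j]=\pi_1\pi_j$; [CD.4] $\mathsf{D}[\langle f,g\rangle]=\langle\mathsf{D}[f],\mathsf{D}[g]\rangle$; [CD.5] $\mathsf{D}[fg]=\langle\pi_0f,\mathsf{D}[f]\rangle\mathsf{D}[g]$; [CD.6] $\ell\mathsf{D}^2[f]=\mathsf{D}[f]$, $\ell=\langle1,0\rangle\times\langle0,1\rangle$; [CD.7] $c\mathsf{D}^2[f]=\mathsf{D}^2[f]$, $c=\langle\langle\pi_0\pi_0,\pi_1\pi_0\rangle,\langle\pi_0\pi_1,\pi_1\pi_1\rangle\rangle$ on $(A\times A)\times(A\times A)$. Let $\mathsf{P}(A)=A\times A$, $\mathsf{P}(f)=f\times f$. A pre-$\mathsf{D}$-sequence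 $f_\bullet:A\to B$ is $(f_n)$, $f_n:\mathsf{P}^n(A)\to B$; $(h\cdot f_\bullet)_n=\mathsf{P}^n(h)f_n$; $\mathsf{T}(f_\bullet)_n=\langle\mathsf{P}^n(\pi_0)f_n,f_{n+1}\rangle$; $\mathsf{D}[f_\bullet]_n=f_{n+1}$; identity $i_0=1$, $i_n=\pi_1\cdots\pi_1$ ($n$ times); composition $(f_\bullet\ast g_\bullet)_n=\mathsf{T}^n(f_\bullet)_0g_n$; products: projections $i_\bullet\cdot\pi_j$, pairing pointwise; addition pointwise. A $\mathsf{D}$-sequence: pre-$\mathsf{D}$-sequence with, for all $n$ and $C=\mathsf{P}^n(A)$, $\langle1,0\rangle\cdot\mathsf{D}^{n+1}[f_\bullet]=0_\bullet$, $(1\times(\pi_0+\pi_1))\cdot\mathsf{D}^{n+1}[f_\bullet]=(1\times\pi_0)\cdot\mathsf{D}^{n+1}[f_\bullet]+(1\times\pi_1)\cdot\mathsf{D}^{n+1}[f_\bullet]$, $\ell\cdot\mathsf{D}^{n+2}[f_\bullet]=\mathsf{D}^{n+1}[f_\bullet]$, $c\cdot\mathsf{D}^{n+2}[f_\bullet]=\mathsf{D}^{n+2}[f_\bullet]$ (maps for $C$). $\mathcal{D}[\mathbb{X}]$: the category of $\mathsf{D}$-sequences. $\mathcal{D}[\mathsf{F}](f_\bullet)_n=\mathsf{F}(f_n)$; $\varepsilon(f_\bullet)=f_0$; $\delta(f_\bullet)_0=f_\bullet$, $\delta(f_\bullet)_n=\mathsf{D}^n[f_\bullet]$. A $\mathcal{D}$-coalgebra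 is $(\mathbb{X},\omega)$, $\mathbb{X}$ a Cartesian left additive category, $\omega:\mathbb{X}\to\mathcal{D}[\mathbb{X}]$ a functor preserving finite products strictly and $+,0$, with $\omega\varepsilon=1_{\mathbb{X}}$ and $\omega\delta=\omega\,\mathcal{D}[\omega]$. *)

theory Defs
  imports Main
begin

text \<open>A (concrete, set-based) presentation of a Cartesian left additive category.
  Composition is written in diagrammatic order: cmp f g means "first f, then g".\<close>

record ('o, 'a) cla_struct =
  Ob   :: "'o set"
  Ar   :: "'a set"
  dm   :: "'a \<Rightarrow> 'o"
  cd   :: "'a \<Rightarrow> 'o"
  idm  :: "'o \<Rightarrow> 'a"
  cmp  :: "'a \<Rightarrow> 'a \<Rightarrow> 'a"
  prd  :: "'o \<Rightarrow> 'o \<Rightarrow> 'o"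
  trm  :: "'o"
  pr0  :: "'o \<Rightarrow> 'o \<Rightarrow> 'a"
  pr1  :: "'o \<Rightarrow> 'o \<Rightarrow> 'a"
  pair :: "'a \<Rightarrow> 'a \<Rightarrow> 'a"
  bang :: "'o \<Rightarrow> 'a"
  add  :: "'a \<Rightarrow> 'a \<Rightarrow> 'a"
  zer  :: "'o \<Rightarrow> 'o \<Rightarrow> 'a"

definition hom :: "('o, 'a, 'm) cla_struct_scheme \<Rightarrow> 'o \<Rightarrow> 'o \<Rightarrow> 'a set" where
  "hom X A B = {f \<in> Ar X. dm X f = A \<and> cd X f = B}"

definition cla :: "('o, 'a, 'm) cla_struct_scheme \<Rightarrow> bool" where
  "cla X \<longleftrightarrow>
     \<comment> \<open>category\<close>
     (\<forall>f \<in> Ar X. dm X f \<in> Ob X \<and> cd X f \<in> Ob X) \<and>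
     (\<forall>A \<in> Ob X. idm X A \<in> hom X A A) \<and>
     (\<forall>A B C f g. f \<in> hom X A B \<and> g \<in> hom X B C \<longrightarrow> cmp X f g \<in> hom X A C) \<and>
     (\<forall>A B C D f g h. f \<in> hom X A B \<and> g \<in> hom X B C \<and> h \<in> hom X C D \<longrightarrow>
        cmp X (cmp X f g) h = cmp X f (cmp X g h)) \<and>
     (\<forall>A B f. f \<in> hom X A B \<longrightarrow> cmp X (idm X A) f = f \<and> cmp X f (idm X B) = f) \<and>
     \<comment> \<open>finite products: terminal object and binary products\<close>
     trm X \<in> Ob X \<and>
     (\<forall>A \<in> Ob X. bang X A \<in> hom X A (trm X) \<and> (\<forall>f \<in> hom X A (trm X). f = bang X A)) \<and>
     (\<forall>A \<in> Ob X. \<forall>B \<in> Ob X. prd X A B \<in> Ob X \<and>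
        pr0 X A B \<in> hom X (prd X A B) A \<and> pr1 X A B \<in> hom X (prd X A B) B) \<and>
     (\<forall>A B C f g. A \<in> Ob X \<and> B \<in> Ob X \<and> f \<in> hom X C A \<and> g \<in> hom X C B \<longrightarrow>
        pair X f g \<in> hom X C (prd X A B) \<and>
        cmp X (pair X f g) (pr0 X A B) = f \<and> cmp X (pair X f g) (pr1 X A B) = g) \<and>
     (\<forall>A B C h. A \<in> Ob X \<and> B \<in> Ob X \<and> h \<in> hom X C (prd X A B) \<longrightarrow>
        pair X (cmp X h (pr0 X A B)) (cmp X h (pr1 X A B)) = h) \<and>
     \<comment> \<open>hom-sets are commutative monoids\<close>
     (\<forall>A \<in> Ob X. \<forall>B \<in> Ob X. zer X A B \<in> hom X A B) \<and>
     (\<forall>A B f g. f \<in> hom X A B \<and> g \<in> hom X A B \<longrightarrow> add X f g \<in> hom X A B) \<and>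
     (\<forall>A B f g h. f \<in> hom X A B \<and> g \<in> hom X A B \<and> h \<in> hom X A B \<longrightarrow>
        add X (add X f g) h = add X f (add X g h)) \<and>
     (\<forall>A B f g. f \<in> hom X A B \<and> g \<in> hom X A B \<longrightarrow> add X f g = add X g f) \<and>
     (\<forall>A B f. f \<in> hom X A B \<longrightarrow> add X f (zer X A B) = f) \<and>
     \<comment> \<open>left additivity: f(g+h) = fg + fh, f0 = 0\<close>
     (\<forall>A B C f g h. f \<in> hom X A B \<and> g \<in> hom X B C \<and> h \<in> hom X B C \<longrightarrow>
        cmp X f (add X g h) = add X (cmp X f g) (cmp X f h)) \<and>
     (\<forall>A B C f. f \<in> hom X A B \<and> C \<in> Ob X \<longrightarrow> cmp X f (zer X B C) = zer X A C) \<and>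
     \<comment> \<open>projections are additive\<close>
     (\<forall>A B C f g. A \<in> Ob X \<and> B \<in> Ob X \<and> f \<in> hom X C (prd X A B) \<and> g \<in> hom X C (prd X A B) \<longrightarrow>
        cmp X (add X f g) (pr0 X A B) = add X (cmp X f (pr0 X A B)) (cmp X g (pr0 X A B)) \<and>
        cmp X (add X f g) (pr1 X A B) = add X (cmp X f (pr1 X A B)) (cmp X g (pr1 X A B))) \<and>
     (\<forall>A B C. A \<in> Ob X \<and> B \<in> Ob X \<and> C \<in> Ob X \<longrightarrow>
        cmp X (zer X C (prd X A B)) (pr0 X A B) = zer X C A \<and>
        cmp X (zer X C (prd X A B)) (pr1 X A B) = zer X C B)"

definition tmap :: "('o, 'a, 'm) cla_struct_scheme \<Rightarrow> 'a \<Rightarrow> 'a \<Rightarrow> 'a" where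
  "tmap X f g = pair X (cmp X (pr0 X (dm X f) (dm X g)) f) (cmp X (pr1 X (dm X f) (dm X g)) g)"

fun Pob :: "('o, 'a, 'm) cla_struct_scheme \<Rightarrow> nat \<Rightarrow> 'o \<Rightarrow> 'o" where
  "Pob X 0 A = A"
| "Pob X (Suc n) A = prd X (Pob X n A) (Pob X n A)"

fun Pmap :: "('o, 'a, 'm) cla_struct_scheme \<Rightarrow> nat \<Rightarrow> 'a \<Rightarrow> 'a" where
  "Pmap X 0 h = h"
| "Pmap X (Suc n) h = tmap X (Pmap X n h) (Pmap X n h)"

definition pre_dseq :: "('o, 'a, 'm) cla_struct_scheme \<Rightarrow> 'o \<Rightarrow> 'o \<Rightarrow> (nat \<Rightarrow> 'a) \<Rightarrow> bool" where
  "pre_dseq X A B f \<longleftrightarrow> (\<forall>n. f n \<in> hom X (Pob X n A) B)"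

definition act :: "('o, 'a, 'm) cla_struct_scheme \<Rightarrow> 'a \<Rightarrow> (nat \<Rightarrow> 'a) \<Rightarrow> nat \<Rightarrow> 'a" where
  "act X h f = (\<lambda>n. cmp X (Pmap X n h) (f n))"

definition Dpow :: "nat \<Rightarrow> (nat \<Rightarrow> 'a) \<Rightarrow> nat \<Rightarrow> 'a" where
  "Dpow k f = (\<lambda>n. f (k + n))"

definition Tseq :: "('o, 'a, 'm) cla_struct_scheme \<Rightarrow> 'o \<Rightarrow> (nat \<Rightarrow> 'a) \<Rightarrow> nat \<Rightarrow> 'a" where
  "Tseq X A f = (\<lambda>n. pair X (cmp X (Pmap X n (pr0 X A A)) (f n)) (f (Suc n)))"

fun Titer :: "('o, 'a, 'm) cla_struct_scheme \<Rightarrow> 'o \<Rightarrow> nat \<Rightarrow> (nat \<Rightarrow> 'a) \<Rightarrow> nat \<Rightarrow> 'a" where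
  "Titer X A 0 f = f"
| "Titer X A (Suc n) f = Tseq X (Pob X n A) (Titer X A n f)"

fun idseq :: "('o, 'a, 'm) cla_struct_scheme \<Rightarrow> 'o \<Rightarrow> nat \<Rightarrow> 'a" where
  "idseq X A 0 = idm X A"
| "idseq X A (Suc n) = cmp X (pr1 X (Pob X n A) (Pob X n A)) (idseq X A n)"

definition compseq :: "('o, 'a, 'm) cla_struct_scheme \<Rightarrow> 'o \<Rightarrow> (nat \<Rightarrow> 'a) \<Rightarrow> (nat \<Rightarrow> 'a) \<Rightarrow> nat \<Rightarrow> 'a" where
  "compseq X A f g = (\<lambda>n. cmp X (Titer X A n f 0) (g n))"

definition zeroseq :: "('o, 'a, 'm) cla_struct_scheme \<Rightarrow> 'o \<Rightarrow> 'o \<Rightarrow> nat \<Rightarrow> 'a" where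
  "zeroseq X A B = (\<lambda>n. zer X (Pob X n A) B)"

definition addseq :: "('o, 'a, 'm) cla_struct_scheme \<Rightarrow> (nat \<Rightarrow> 'a) \<Rightarrow> (nat \<Rightarrow> 'a) \<Rightarrow> nat \<Rightarrow> 'a" where
  "addseq X f g = (\<lambda>n. add X (f n) (g n))"

definition pairseq :: "('o, 'a, 'm) cla_struct_scheme \<Rightarrow> (nat \<Rightarrow> 'a) \<Rightarrow> (nat \<Rightarrow> 'a) \<Rightarrow> nat \<Rightarrow> 'a" where
  "pairseq X f g = (\<lambda>n. pair X (f n) (g n))"

definition bangseq :: "('o, 'a, 'm) cla_struct_scheme \<Rightarrow> 'o \<Rightarrow> nat \<Rightarrow> 'a" where
  "bangseq X A = (\<lambda>n. bang X (Pob X n A))"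

definition ell :: "('o, 'a, 'm) cla_struct_scheme \<Rightarrow> 'o \<Rightarrow> 'a" where
  "ell X C = tmap X (pair X (idm X C) (zer X C C)) (pair X (zer X C C) (idm X C))"

definition cswap :: "('o, 'a, 'm) cla_struct_scheme \<Rightarrow> 'o \<Rightarrow> 'a" where
  "cswap X C = (let Q = prd X C C;
                    q0 = pr0 X Q Q; q1 = pr1 X Q Q;
                    p0 = pr0 X C C; p1 = pr1 X C C
                in pair X (pair X (cmp X q0 p0) (cmp X q1 p0))
                          (pair X (cmp X q0 p1) (cmp X q1 p1)))"

definition dseq :: "('o, 'a, 'm) cla_struct_scheme \<Rightarrow> 'o \<Rightarrow> 'o \<Rightarrow> (nat \<Rightarrow> 'a) \<Rightarrow> bool" where
  "dseq X A B f \<longleftrightarrow> pre_dseq X A B f \<and>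
     (\<forall>n. let C = Pob X n A in
        act X (pair X (idm X C) (zer X C C)) (Dpow (Suc n) f) = zeroseq X C B \<and>
        act X (tmap X (idm X C) (add X (pr0 X C C) (pr1 X C C))) (Dpow (Suc n) f) =
          addseq X (act X (tmap X (idm X C) (pr0 X C C)) (Dpow (Suc n) f))
                   (act X (tmap X (idm X C) (pr1 X C C)) (Dpow (Suc n) f)) \<and>
        act X (ell X C) (Dpow (Suc (Suc n)) f) = Dpow (Suc n) f \<and>
        act X (cswap X C) (Dpow (Suc (Suc n)) f) = Dpow (Suc (Suc n)) f)"

text \<open>The functor \<omega> is the identity on objects (forced by
  \<omega>\<varepsilon> = 1, since \<varepsilon> is the identity on objects); on arrows it sends f : A \<rightarrow> B
  to a D-sequence \<omega> f : A \<rightarrow> B.\<close>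
definition D_coalgebra :: "('o, 'a, 'm) cla_struct_scheme \<Rightarrow> ('a \<Rightarrow> nat \<Rightarrow> 'a) \<Rightarrow> bool" where
  "D_coalgebra X \<omega> \<longleftrightarrow> cla X \<and>
     \<comment> \<open>\<omega> lands in D[X]\<close>
     (\<forall>A B f. f \<in> hom X A B \<longrightarrow> dseq X A B (\<omega> f)) \<and>
     \<comment> \<open>functoriality\<close>
     (\<forall>A \<in> Ob X. \<omega> (idm X A) = idseq X A) \<and>
     (\<forall>A B C f g. f \<in> hom X A B \<and> g \<in> hom X B C \<longrightarrow>
        \<omega> (cmp X f g) = compseq X A (\<omega> f) (\<omega> g)) \<and>
     \<comment> \<open>strict preservation of finite products\<close>
     (\<forall>A \<in> Ob X. \<omega> (bang X A) = bangseq X A) \<and>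
     (\<forall>A \<in> Ob X. \<forall>B \<in> Ob X.
        \<omega> (pr0 X A B) = act X (pr0 X A B) (idseq X A) \<and>
        \<omega> (pr1 X A B) = act X (pr1 X A B) (idseq X B)) \<and>
     (\<forall>A B C f g. A \<in> Ob X \<and> B \<in> Ob X \<and> f \<in> hom X C A \<and> g \<in> hom X C B \<longrightarrow>
        \<omega> (pair X f g) = pairseq X (\<omega> f) (\<omega> g)) \<and>
     \<comment> \<open>preservation of + and 0\<close>
     (\<forall>A B f g. f \<in> hom X A B \<and> g \<in> hom X A B \<longrightarrow> \<omega> (add X f g) = addseq X (\<omega> f) (\<omega> g)) \<and>
     (\<forall>A \<in> Ob X. \<forall>B \<in> Ob X. \<omega> (zer X A B) = zeroseq X A B) \<and>
     \<comment> \<open>\<omega>\<varepsilon> = 1\<close>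
     (\<forall>f \<in> Ar X. \<omega> f 0 = f) \<and>
     \<comment> \<open>\<omega>\<delta> = \<omega> D[\<omega>]: \<delta>(\<omega> f)_n = D^n[\<omega> f] and D[\<omega>](\<omega> f)_n = \<omega>((\<omega> f)_n)\<close>
     (\<forall>f \<in> Ar X. \<forall>n. \<omega> (\<omega> f n) = Dpow n (\<omega> f))"

definition cdc :: "('o, 'a, 'm) cla_struct_scheme \<Rightarrow> ('a \<Rightarrow> 'a) \<Rightarrow> bool" where
  "cdc X D \<longleftrightarrow> cla X \<and>
     (\<forall>A B f. f \<in> hom X A B \<longrightarrow> D f \<in> hom X (prd X A A) B) \<and>
     \<comment> \<open>CD.1\<close>
     (\<forall>A B f g. f \<in> hom X A B \<and> g \<in> hom X A B \<longrightarrow> D (add X f g) = add X (D f) (D g)) \<and>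
     (\<forall>A \<in> Ob X. \<forall>B \<in> Ob X. D (zer X A B) = zer X (prd X A A) B) \<and>
     \<comment> \<open>CD.2\<close>
     (\<forall>A B f. f \<in> hom X A B \<longrightarrow>
        cmp X (tmap X (idm X A) (add X (pr0 X A A) (pr1 X A A))) (D f) =
          add X (cmp X (tmap X (idm X A) (pr0 X A A)) (D f))
                (cmp X (tmap X (idm X A) (pr1 X A A)) (D f)) \<and>
        cmp X (pair X (idm X A) (zer X A A)) (D f) = zer X A B) \<and>
     \<comment> \<open>CD.3\<close>
     (\<forall>A \<in> Ob X. D (idm X A) = pr1 X A A) \<and>
     (\<forall>A \<in> Ob X. \<forall>B \<in> Ob X.
        D (pr0 X A B) = cmp X (pr1 X (prd X A B) (prd X A B)) (pr0 X A B) \<and>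
        D (pr1 X A B) = cmp X (pr1 X (prd X A B) (prd X A B)) (pr1 X A B)) \<and>
     \<comment> \<open>CD.4\<close>
     (\<forall>A B C f g. A \<in> Ob X \<and> B \<in> Ob X \<and> f \<in> hom X C A \<and> g \<in> hom X C B \<longrightarrow>
        D (pair X f g) = pair X (D f) (D g)) \<and>
     \<comment> \<open>CD.5\<close>
     (\<forall>A B C f g. f \<in> hom X A B \<and> g \<in> hom X B C \<longrightarrow>
        D (cmp X f g) = cmp X (pair X (cmp X (pr0 X A A) f) (D f)) (D g)) \<and>
     \<comment> \<open>CD.6\<close>
     (\<forall>A B f. f \<in> hom X A B \<longrightarrow> cmp X (ell X A) (D (D f)) = D f) \<and>
     \<comment> \<open>CD.7\<close>
     (\<forall>A B f. f \<in> hom X A B \<longrightarrow> cmp X (cswap X A) (D (D f)) = D (D f))"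

end

theory Submission
  imports Defs
begin

lemma cla_ob: assumes "cla X" and "A \<in> Ob X" "B \<in> Ob X" shows "prd X A B \<in> Ob X \<and> pr0 X A B \<in> hom X (prd X A B) A \<and> pr1 X A B \<in> hom X (prd X A B) B"
proof -
  have "\<forall>A \<in> Ob X. \<forall>B \<in> Ob X. prd X A B \<in> Ob X \<and> pr0 X A B \<in> hom X (prd X A B) A \<and> pr1 X A B \<in> hom X (prd X A B) B"
    using assms(1) unfolding cla_def by (elim conjE) assumption
  then show ?thesis using assms by blast
qed

lemma cla_id: assumes "cla X" and "A \<in> Ob X" shows "idm X A \<in> hom X A A"
proof -
  have "\<forall>A \<in> Ob X. idm X A \<in> hom X A A"
    using assms(1) unfolding cla_def by (elim conjE) assumption
  then show ?thesis using assms by blast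
qed

lemma cla_idr: assumes "cla X" and "f \<in> hom X A B" shows "cmp X f (idm X B) = f"
proof -
  have "\<forall>A B f. f \<in> hom X A B \<longrightarrow> cmp X (idm X A) f = f \<and> cmp X f (idm X B) = f"
    using assms(1) unfolding cla_def by (elim conjE) assumption
  then show ?thesis using assms by blast
qed

lemma cla_cmp: assumes "cla X" and "f \<in> hom X A B" "g \<in> hom X B C" shows "cmp X f g \<in> hom X A C"
proof -
  have "\<forall>A B C f g. f \<in> hom X A B \<and> g \<in> hom X B C \<longrightarrow> cmp X f g \<in> hom X A C"
    using assms(1) unfolding cla_def by (elim conjE) assumption
  then show ?thesis using assms by blast
qed

lemma cla_assoc: assumes "cla X" and "f \<in> hom X A B" "g \<in> hom X B C" "h \<in> hom X C D" shows "cmp X (cmp X f g) h = cmp X f (cmp X g h)"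
proof -
  have "\<forall>A B C D f g h. f \<in> hom X A B \<and> g \<in> hom X B C \<and> h \<in> hom X C D \<longrightarrow> cmp X (cmp X f g) h = cmp X f (cmp X g h)"
    using assms(1) unfolding cla_def by (elim conjE) assumption
  then show ?thesis using assms by blast
qed

lemma cla_pair: assumes "cla X" and "A \<in> Ob X" "B \<in> Ob X" "f \<in> hom X C A" "g \<in> hom X C B" shows "pair X f g \<in> hom X C (prd X A B) \<and> cmp X (pair X f g) (pr0 X A B) = f \<and> cmp X (pair X f g) (pr1 X A B) = g"
proof -
  have "\<forall>A B C f g. A \<in> Ob X \<and> B \<in> Ob X \<and> f \<in> hom X C A \<and> g \<in> hom X C B \<longrightarrow> pair X f g \<in> hom X C (prd X A B) \<and> cmp X (pair X f g) (pr0 X A B) = f \<and> cmp X (pair X f g) (pr1 X A B) = g"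
    using assms(1) unfolding cla_def by (elim conjE) assumption
  then show ?thesis using assms by blast
qed

theorem proposition4p19:
  fixes X :: "('o, 'a, 'm) cla_struct_scheme" and \<omega> :: "'a \<Rightarrow> nat \<Rightarrow> 'a"
  assumes "D_coalgebra X \<omega>"
  shows "cdc X (\<lambda>f. \<omega> f 1)"
proof -
  have cla: "cla X" using assms unfolding D_coalgebra_def by (elim conjE)
  have ds0: "\<forall>A B f. f \<in> hom X A B \<longrightarrow> dseq X A B (\<omega> f)" 
    using assms unfolding D_coalgebra_def by (elim conjE) assumption
  have wid0: "\<forall>A \<in> Ob X. \<omega> (idm X A) = idseq X A" 
    using assms unfolding D_coalgebra_def by (elim conjE) assumption
  have wcmp0: "\<forall>A B C f g. f \<in> hom X A B \<and> g \<in> hom X B C \<longrightarrow>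
        \<omega> (cmp X f g) = compseq X A (\<omega> f) (\<omega> g)" 
    using assms unfolding D_coalgebra_def by (elim conjE) assumption
  have wpr0: "\<forall>A \<in> Ob X. \<forall>B \<in> Ob X.
        \<omega> (pr0 X A B) = act X (pr0 X A B) (idseq X A) \<and>
        \<omega> (pr1 X A B) = act X (pr1 X A B) (idseq X B)" 
    using assms unfolding D_coalgebra_def by (elim conjE) assumption
  have wpair0: "\<forall>A B C f g. A \<in> Ob X \<and> B \<in> Ob X \<and> f \<in> hom X C A \<and> g \<in> hom X C B \<longrightarrow>
        \<omega> (pair X f g) = pairseq X (\<omega> f) (\<omega> g)" 
    using assms unfolding D_coalgebra_def by (elim conjE) assumption
  have wadd0: "\<forall>A B f g. f \<in> hom X A B \<and> g \<in> hom X A B \<longrightarrow> \<omega> (add X f g) = addseq X (\<omega> f) (\<omega> g)" 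
    using assms unfolding D_coalgebra_def by (elim conjE) assumption
  have wzer0: "\<forall>A \<in> Ob X. \<forall>B \<in> Ob X. \<omega> (zer X A B) = zeroseq X A B" 
    using assms unfolding D_coalgebra_def by (elim conjE) assumption
  have w00: "\<forall>f \<in> Ar X. \<omega> f 0 = f" 
    using assms unfolding D_coalgebra_def by (elim conjE) assumption
  have ww0: "\<forall>f \<in> Ar X. \<forall>n. \<omega> (\<omega> f n) = Dpow n (\<omega> f)" 
    using assms unfolding D_coalgebra_def by (elim conjE) assumption
  have ds: "\<And>A B f. f \<in> hom X A B \<Longrightarrow> dseq X A B (\<omega> f)" using ds0 by blast
  have wid: "\<And>A. A \<in> Ob X \<Longrightarrow> \<omega> (idm X A) = idseq X A" using wid0 by blast
  have wcmp: "\<And>A B C f g. f \<in> hom X A B \<Longrightarrow> g \<in> hom X B C \<Longrightarrow>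
        \<omega> (cmp X f g) = compseq X A (\<omega> f) (\<omega> g)" using wcmp0 by blast
  have wpr: "\<And>A B. A \<in> Ob X \<Longrightarrow> B \<in> Ob X \<Longrightarrow>
        \<omega> (pr0 X A B) = act X (pr0 X A B) (idseq X A) \<and>
        \<omega> (pr1 X A B) = act X (pr1 X A B) (idseq X B)" using wpr0 by blast
  have wpair: "\<And>A B C f g. A \<in> Ob X \<Longrightarrow> B \<in> Ob X \<Longrightarrow> f \<in> hom X C A \<Longrightarrow> g \<in> hom X C B \<Longrightarrow>
        \<omega> (pair X f g) = pairseq X (\<omega> f) (\<omega> g)" using wpair0 by blast
  have wadd: "\<And>A B f g. f \<in> hom X A B \<Longrightarrow> g \<in> hom X A B \<Longrightarrow> \<omega> (add X f g) = addseq X (\<omega> f) (\<omega> g)"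
    using wadd0 by blast
  have wzer: "\<And>A B. A \<in> Ob X \<Longrightarrow> B \<in> Ob X \<Longrightarrow> \<omega> (zer X A B) = zeroseq X A B"
    using wzer0 by blast
  have w0: "\<And>f. f \<in> Ar X \<Longrightarrow> \<omega> f 0 = f" using w00 by blast
  have ww: "\<And>f n. f \<in> Ar X \<Longrightarrow> \<omega> (\<omega> f n) = Dpow n (\<omega> f)" using ww0 by blast
  have homAr: "\<And>f A B. f \<in> hom X A B \<Longrightarrow> f \<in> Ar X" by (simp add: hom_def)
  have DD: "\<And>f A B. f \<in> hom X A B \<Longrightarrow> \<omega> (\<omega> f 1) 1 = \<omega> f 2"
    using ww homAr by (simp add: Dpow_def numeral_2_eq_2)
  have dsn: "\<And>A B f. f \<in> hom X A B \<Longrightarrow>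
        act X (pair X (idm X A) (zer X A A)) (Dpow 1 (\<omega> f)) 0 = zeroseq X A B 0 \<and>
        act X (tmap X (idm X A) (add X (pr0 X A A) (pr1 X A A))) (Dpow 1 (\<omega> f)) 0 =
          addseq X (act X (tmap X (idm X A) (pr0 X A A)) (Dpow 1 (\<omega> f)))
                   (act X (tmap X (idm X A) (pr1 X A A)) (Dpow 1 (\<omega> f))) 0 \<and>
        act X (ell X A) (Dpow 2 (\<omega> f)) 0 = Dpow 1 (\<omega> f) 0 \<and>
        act X (cswap X A) (Dpow 2 (\<omega> f)) 0 = Dpow 2 (\<omega> f) 0"
  proof -
    fix A B f assume "f \<in> hom X A B"
    then have "dseq X A B (\<omega> f)" by (rule ds)
    then have "let C = Pob X 0 A in
        act X (pair X (idm X C) (zer X C C)) (Dpow (Suc 0) (\<omega> f)) = zeroseq X C B \<and>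
        act X (tmap X (idm X C) (add X (pr0 X C C) (pr1 X C C))) (Dpow (Suc 0) (\<omega> f)) =
          addseq X (act X (tmap X (idm X C) (pr0 X C C)) (Dpow (Suc 0) (\<omega> f)))
                   (act X (tmap X (idm X C) (pr1 X C C)) (Dpow (Suc 0) (\<omega> f))) \<and>
        act X (ell X C) (Dpow (Suc (Suc 0)) (\<omega> f)) = Dpow (Suc 0) (\<omega> f) \<and>
        act X (cswap X C) (Dpow (Suc (Suc 0)) (\<omega> f)) = Dpow (Suc (Suc 0)) (\<omega> f)"
      unfolding dseq_def by blast
    then show "?thesis A B f" by (simp add: Let_def numeral_2_eq_2)
  qed
  show ?thesis
    unfolding cdc_def
  proof (intro conjI allI impI ballI)
    show "cla X" by (rule cla)
  next
    fix A B f assume f: "f \<in> hom X A B"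
    then have "pre_dseq X A B (\<omega> f)" using ds[OF f] unfolding dseq_def by (elim conjE)
    then show "\<omega> f 1 \<in> hom X (prd X A A) B" unfolding pre_dseq_def
      by (metis One_nat_def Pob.simps)
  next
    fix A B f g assume "f \<in> hom X A B \<and> g \<in> hom X A B"
    then show "\<omega> (add X f g) 1 = add X (\<omega> f 1) (\<omega> g 1)" by (elim conjE) (simp add: wadd addseq_def)
  next
    fix A B assume "A \<in> Ob X" "B \<in> Ob X"
    then show "\<omega> (zer X A B) 1 = zer X (prd X A A) B" by (simp add: wzer zeroseq_def)
  next
    fix A B f assume f: "f \<in> hom X A B"
    from dsn[OF f] show
      "cmp X (tmap X (idm X A) (add X (pr0 X A A) (pr1 X A A))) (\<omega> f 1) =
       add X (cmp X (tmap X (idm X A) (pr0 X A A)) (\<omega> f 1))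
         (cmp X (tmap X (idm X A) (pr1 X A A)) (\<omega> f 1))"
      by (simp add: act_def addseq_def Dpow_def)
  next
    fix A B f assume f: "f \<in> hom X A B"
    from dsn[OF f] show "cmp X (pair X (idm X A) (zer X A A)) (\<omega> f 1) = zer X A B"
      by (simp add: act_def zeroseq_def Dpow_def)
  next
    fix A assume a: "A \<in> Ob X"
    then have p: "pr1 X A A \<in> hom X (prd X A A) A" using cla_ob[OF cla] by blast
    have "\<omega> (idm X A) = idseq X A" using wid a by blast
    then show "\<omega> (idm X A) 1 = pr1 X A A" using cla_idr[OF cla p] by simp
  next
    fix A B assume a: "A \<in> Ob X" and b: "B \<in> Ob X"
    define P where "P = prd X A B"
    have P: "P \<in> Ob X" using cla_ob[OF cla a b] P_def by blast
    have p0: "pr0 X A B \<in> hom X P A" "pr1 X A B \<in> hom X P B" using cla_ob[OF cla a b] P_def by blast+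
    have q: "pr0 X P P \<in> hom X (prd X P P) P" "pr1 X P P \<in> hom X (prd X P P) P" using cla_ob[OF cla P P] by blast+
    have dm0: "dm X (pr0 X A B) = P" "dm X (pr1 X A B) = P" using p0 by (simp_all add: hom_def)
    have u0: "cmp X (pr0 X P P) (pr0 X A B) \<in> hom X (prd X P P) A"
      "cmp X (pr1 X P P) (pr0 X A B) \<in> hom X (prd X P P) A"
      "cmp X (pr0 X P P) (pr1 X A B) \<in> hom X (prd X P P) B"
      "cmp X (pr1 X P P) (pr1 X A B) \<in> hom X (prd X P P) B"
      using cla_cmp[OF cla] q p0 by blast+
    have pa: "pr1 X A A \<in> hom X (prd X A A) A" "pr1 X B B \<in> hom X (prd X B B) B"
      using cla_ob[OF cla a a] cla_ob[OF cla b b] by blast+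
    have ia: "idm X A \<in> hom X A A" "idm X B \<in> hom X B B" using cla_id[OF cla] a b by blast+
    have pr1A: "cmp X (pr1 X A A) (idm X A) = pr1 X A A" using cla_idr[OF cla pa(1)] .
    have pr1B: "cmp X (pr1 X B B) (idm X B) = pr1 X B B" using cla_idr[OF cla pa(2)] .
    have w01: "\<omega> (pr0 X A B) = act X (pr0 X A B) (idseq X A)" "\<omega> (pr1 X A B) = act X (pr1 X A B) (idseq X B)"
      using wpr a b by blast+
    have e0: "\<omega> (pr0 X A B) 1 = cmp X (pair X (cmp X (pr0 X P P) (pr0 X A B)) (cmp X (pr1 X P P) (pr0 X A B))) (cmp X (pr1 X A A) (idm X A))"
      using w01 dm0 by (simp add: act_def tmap_def P_def)
    have e1: "\<omega> (pr1 X A B) 1 = cmp X (pair X (cmp X (pr0 X P P) (pr1 X A B)) (cmp X (pr1 X P P) (pr1 X A B))) (cmp X (pr1 X B B) (idm X B))"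
      using w01 dm0 by (simp add: act_def tmap_def P_def)
    have pp0: "pair X (cmp X (pr0 X P P) (pr0 X A B)) (cmp X (pr1 X P P) (pr0 X A B)) \<in> hom X (prd X P P) (prd X A A)
       \<and> cmp X (pair X (cmp X (pr0 X P P) (pr0 X A B)) (cmp X (pr1 X P P) (pr0 X A B))) (pr1 X A A) = cmp X (pr1 X P P) (pr0 X A B)"
      using cla_pair[OF cla a a u0(1) u0(2)] by blast
    have pp1: "pair X (cmp X (pr0 X P P) (pr1 X A B)) (cmp X (pr1 X P P) (pr1 X A B)) \<in> hom X (prd X P P) (prd X B B)
       \<and> cmp X (pair X (cmp X (pr0 X P P) (pr1 X A B)) (cmp X (pr1 X P P) (pr1 X A B))) (pr1 X B B) = cmp X (pr1 X P P) (pr1 X A B)"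
      using cla_pair[OF cla b b u0(3) u0(4)] by blast
    show "\<omega> (pr0 X A B) 1 = cmp X (pr1 X (prd X A B) (prd X A B)) (pr0 X A B)"
      using e0 pp0 cla_assoc[OF cla _ pa(1) ia(1)] pr1A cla_idr[OF cla u0(2)] unfolding P_def
      by (metis cla_assoc[OF cla] pa(1) ia(1))
    show "\<omega> (pr1 X A B) 1 = cmp X (pr1 X (prd X A B) (prd X A B)) (pr1 X A B)"
      using e1 pp1 pr1B cla_idr[OF cla u0(4)] unfolding P_def
      by (metis cla_assoc[OF cla] pa(2) ia(2))
  next
    fix A B Cc f g assume "A \<in> Ob X \<and> B \<in> Ob X \<and> f \<in> hom X Cc A \<and> g \<in> hom X Cc B"
    then show "\<omega> (pair X f g) 1 = pair X (\<omega> f 1) (\<omega> g 1)" by (elim conjE) (simp add: wpair pairseq_def)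
  next
    fix A B Cc f g assume fg: "f \<in> hom X A B \<and> g \<in> hom X B Cc"
    then have "\<omega> (cmp X f g) = compseq X A (\<omega> f) (\<omega> g)" using wcmp fg by blast
    moreover have "\<omega> f 0 = f" using fg homAr w0 by blast
    ultimately show "\<omega> (cmp X f g) 1 = cmp X (pair X (cmp X (pr0 X A A) f) (\<omega> f 1)) (\<omega> g 1)"
      by (simp add: compseq_def Tseq_def)
  next
    fix A B f assume f: "f \<in> hom X A B"
    from dsn[OF f] DD[OF f] show "cmp X (ell X A) (\<omega> (\<omega> f 1) 1) = \<omega> f 1"
      by (simp add: act_def Dpow_def numeral_2_eq_2)
  next
    fix A B f assume f: "f \<in> hom X A B"
    from dsn[OF f] DD[OF f] show "cmp X (cswap X A) (\<omega> (\<omega> f 1) 1) = \<omega> (\<omega> f 1) 1"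
      by (simp add: act_def Dpow_def numeral_2_eq_2)
  qed
qed

end
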